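(* For every $n\ge 3$, $\beta(P_\infty\,\Box\, C_n)=2$ if $n$ is odd and $\beta(P_\infty\,\Box\, C_n)=3$ if $n$ is even. Moreover, $\{(0,0),(0,\tfrac{n-1}{2})\}$ is a metric basis of $P_\infty\,\Box\, C_n$ when $n$ is odd, and $\{(0,0),(0,\tfrac n2),(0,1)\}$ is a metric basis when $n$ is even.
   Context: $P_\infty$ has vertex set $\mathbb N=\{0,1,2,\dots\}$ with $i,j$ adjacent iff $|i-j|=1$. $C_n$ has vertex set $\{0,1,\dots,n-1\}$, with $0\le i\le j\le n-1$ adjacent iff $j-i=1$ or $j-i=n-1$. The cartesian product $G\Box H$ has vertex set $V(G)\times V(H)$, where $(a,v)$ is adjacent to $(b,w)$ iff either $a=b$ and $vw\in E(H)$, or $v=w$ and $ab\in E(G)$. A vertex $x$ resolves $u,v$ if $d(u,x)\ne d(v,x)$ (shortest-path distance); a resolving set is a set of vertices resolving every pair of distinct vertices; $\beta$ is the minimum cardinality of a resolving set ($\infty$ if none is finite), and a metric basis is a resolving set of cardinality $\beta$. *)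

theory Defs
  imports Main "HOL-Library.Extended_Nat"
begin

definition edges :: "'a set \<Rightarrow> ('a \<Rightarrow> 'a \<Rightarrow> bool) \<Rightarrow> ('a \<times> 'a) set" where
  "edges V adj = {(u, v). u \<in> V \<and> v \<in> V \<and> adj u v}"

text \<open>Shortest-path distance: least k such that there is a walk of length k from u to v
  (the graphs considered here are connected).\<close>
definition gdist :: "'a set \<Rightarrow> ('a \<Rightarrow> 'a \<Rightarrow> bool) \<Rightarrow> 'a \<Rightarrow> 'a \<Rightarrow> nat" where
  "gdist V adj u v = (LEAST k. (u, v) \<in> (edges V adj) ^^ k)"

definition resolves :: "'a set \<Rightarrow> ('a \<Rightarrow> 'a \<Rightarrow> bool) \<Rightarrow> 'a \<Rightarrow> 'a \<Rightarrow> 'a \<Rightarrow> bool" where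
  "resolves V adj x u v \<longleftrightarrow> gdist V adj u x \<noteq> gdist V adj v x"

definition resolving_set :: "'a set \<Rightarrow> ('a \<Rightarrow> 'a \<Rightarrow> bool) \<Rightarrow> 'a set \<Rightarrow> bool" where
  "resolving_set V adj S \<longleftrightarrow> S \<subseteq> V \<and>
     (\<forall>u\<in>V. \<forall>v\<in>V. u \<noteq> v \<longrightarrow> (\<exists>x\<in>S. resolves V adj x u v))"

text \<open>Metric dimension; \<infinity> if no finite resolving set exists (Inf {} = \<infinity> in enat).\<close>
definition metric_dim :: "'a set \<Rightarrow> ('a \<Rightarrow> 'a \<Rightarrow> bool) \<Rightarrow> enat" where
  "metric_dim V adj = Inf {enat (card S) | S. finite S \<and> resolving_set V adj S}"

definition metric_basis :: "'a set \<Rightarrow> ('a \<Rightarrow> 'a \<Rightarrow> bool) \<Rightarrow> 'a set \<Rightarrow> bool" where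
  "metric_basis V adj S \<longleftrightarrow> finite S \<and> resolving_set V adj S \<and> enat (card S) = metric_dim V adj"

definition path_inf_adj :: "nat \<Rightarrow> nat \<Rightarrow> bool" where
  "path_inf_adj i j \<longleftrightarrow> i = j + 1 \<or> j = i + 1"

definition cycle_adj :: "nat \<Rightarrow> nat \<Rightarrow> nat \<Rightarrow> bool" where
  "cycle_adj n i j \<longleftrightarrow>
     (i \<le> j \<and> (j - i = 1 \<or> j - i = n - 1)) \<or> (j \<le> i \<and> (i - j = 1 \<or> i - j = n - 1))"

definition cycle_vertices :: "nat \<Rightarrow> nat set" where
  "cycle_vertices n = {0..<n}"

definition box_adj :: "('a \<Rightarrow> 'a \<Rightarrow> bool) \<Rightarrow> ('b \<Rightarrow> 'b \<Rightarrow> bool) \<Rightarrow> 'a \<times> 'b \<Rightarrow> 'a \<times> 'b \<Rightarrow> bool" where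
  "box_adj adjG adjH p q \<longleftrightarrow>
     (fst p = fst q \<and> adjH (snd p) (snd q)) \<or> (snd p = snd q \<and> adjG (fst p) (fst q))"

definition PC_vertices :: "nat \<Rightarrow> (nat \<times> nat) set" where
  "PC_vertices n = (UNIV :: nat set) \<times> cycle_vertices n"

definition PC_adj :: "nat \<Rightarrow> nat \<times> nat \<Rightarrow> nat \<times> nat \<Rightarrow> bool" where
  "PC_adj n = box_adj path_inf_adj (cycle_adj n)"

end

theory Submission
  imports Defs
begin

definition dd :: "nat \<Rightarrow> nat \<Rightarrow> nat" where "dd i j = (if i \<le> j then j - i else i - j)"
definition cd :: "nat \<Rightarrow> nat \<Rightarrow> nat \<Rightarrow> nat" where "cd n i j = min (dd i j) (n - dd i j)"
definition DD :: "nat \<Rightarrow> nat \<times> nat \<Rightarrow> nat \<times> nat \<Rightarrow> nat" where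
  "DD n p q = dd (fst p) (fst q) + cd n (snd p) (snd q)"

lemma cd_sym: "cd n i j = cd n j i"
  by (simp add: cd_def dd_def)

lemma DD_self: "DD n p p = 0"
  by (simp add: DD_def cd_def dd_def)

lemma cd_step:
  assumes "n \<ge> 3" "i < n" "i' < n" "k < n" "cycle_adj n i i'"
  shows "cd n i' k \<le> cd n i k + 1"
  using assms unfolding cycle_adj_def cd_def dd_def by (auto split: if_splits)

lemma edge_step:
  assumes "n \<ge> 3" "(w, q) \<in> edges (PC_vertices n) (PC_adj n)" "r \<in> PC_vertices n"
  shows "DD n r q \<le> DD n r w + 1"
proof -
  obtain a i where w: "w = (a,i)" by fastforce
  obtain b j where q: "q = (b,j)" by fastforce
  obtain c k where r: "r = (c,k)" by fastforce
  have V: "i < n" "j < n" "k < n" using assms w q r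
    by (auto simp: edges_def PC_vertices_def cycle_vertices_def)
  have A: "(a = b \<and> cycle_adj n i j) \<or> (i = j \<and> path_inf_adj a b)"
    using assms(2) w q by (auto simp: edges_def PC_adj_def box_adj_def)
  show ?thesis
  proof (cases "a = b \<and> cycle_adj n i j")
    case True
    have "cd n j k \<le> cd n i k + 1" using cd_step[OF assms(1) V(1) V(2) V(3)] True by simp
    moreover have "cd n k j \<le> cd n k i + 1" using calculation by (simp add: cd_sym)
    ultimately show ?thesis using True w q r by (simp add: DD_def)
  next
    case False
    then have "i = j \<and> path_inf_adj a b" using A by auto
    then show ?thesis using w q r by (auto simp: DD_def dd_def path_inf_adj_def)
  qed
qed

lemma path_lower:
  assumes "n \<ge> 3" "(p, q) \<in> edges (PC_vertices n) (PC_adj n) ^^ k" "p \<in> PC_vertices n"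
  shows "DD n p q \<le> k"
  using assms(2)
proof (induction k arbitrary: q)
  case 0
  then show ?case by (simp add: DD_def dd_def cd_def)
next
  case (Suc k)
  then obtain w where "(p,w) \<in> edges (PC_vertices n) (PC_adj n) ^^ k" "(w,q) \<in> edges (PC_vertices n) (PC_adj n)"
    by auto
  with Suc.IH edge_step[OF assms(1) _ assms(3)] show ?case by fastforce
qed

lemma cycle_toward:
  assumes "n \<ge> 3" "i < n" "j < n" "i \<noteq> j"
  shows "\<exists>i'. i' < n \<and> cycle_adj n i i' \<and> cd n i' j + 1 = cd n i j"
proof -
  consider "i < j" "j - i \<le> n - (j - i)" | "i < j" "\<not> j - i \<le> n - (j - i)"
    | "j < i" "i - j \<le> n - (i - j)" | "j < i" "\<not> i - j \<le> n - (i - j)"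
    using assms by linarith
  then show ?thesis
  proof cases
    case 1 then show ?thesis using assms
      by (intro exI[of _ "i+1"]) (auto simp: cycle_adj_def cd_def dd_def)
  next
    case 2 then show ?thesis using assms
      by (intro exI[of _ "if i > 0 then i - 1 else n - 1"]) (auto simp: cycle_adj_def cd_def dd_def)
  next
    case 3 then show ?thesis using assms
      by (intro exI[of _ "i - 1"]) (auto simp: cycle_adj_def cd_def dd_def)
  next
    case 4 then show ?thesis using assms
      by (intro exI[of _ "if i + 1 < n then i + 1 else 0"]) (auto simp: cycle_adj_def cd_def dd_def)
  qed
qed

lemma path_upper:
  assumes "n \<ge> 3" "p \<in> PC_vertices n" "q \<in> PC_vertices n"
  shows "(p, q) \<in> edges (PC_vertices n) (PC_adj n) ^^ (DD n p q)"
  using assms(2)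
proof (induction "DD n p q" arbitrary: p)
  case 0
  obtain a i where p: "p = (a,i)" by fastforce
  obtain b j where q: "q = (b,j)" by fastforce
  have "i < n" "j < n" using 0 assms(3) p q by (auto simp: PC_vertices_def cycle_vertices_def)
  then have "p = q" using 0 p q by (auto simp: DD_def dd_def cd_def split: if_splits)
  then show ?case by (simp add: DD_self)
next
  case (Suc d)
  obtain a i where p: "p = (a,i)" by fastforce
  obtain b j where q: "q = (b,j)" by fastforce
  have V: "i < n" "j < n" using Suc.prems assms(3) p q by (auto simp: PC_vertices_def cycle_vertices_def)
  have "\<exists>w. w \<in> PC_vertices n \<and> PC_adj n p w \<and> DD n w q = d"
  proof (cases "a = b")
    case False
    show ?thesis
      by (rule exI[of _ "(if a < b then a + 1 else a - 1, i)"])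
         (use False V Suc.hyps(2) p q in \<open>auto simp: PC_vertices_def cycle_vertices_def PC_adj_def box_adj_def path_inf_adj_def DD_def dd_def\<close>)
  next
    case True
    then have "i \<noteq> j" using Suc.hyps(2) p q by (auto simp: DD_def dd_def cd_def)
    then obtain i' where "i' < n" "cycle_adj n i i'" "cd n i' j + 1 = cd n i j"
      using cycle_toward[OF assms(1) V] by blast
    then show ?thesis
      by (intro exI[of _ "(a, i')"])
         (use True V Suc.hyps(2) p q in \<open>auto simp: PC_vertices_def cycle_vertices_def PC_adj_def box_adj_def DD_def dd_def\<close>)
  qed
  then obtain w where w: "w \<in> PC_vertices n" "PC_adj n p w" "DD n w q = d" by blast
  have "(p, w) \<in> edges (PC_vertices n) (PC_adj n)" using w Suc.prems by (simp add: edges_def)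
  moreover have "(w, q) \<in> edges (PC_vertices n) (PC_adj n) ^^ d" using Suc.hyps(1)[OF w(3)[symmetric] w(1)] w(3) by simp
  ultimately show ?case using Suc.hyps(2) by (metis relpow_Suc_I2)
qed

lemma gdist_eq:
  assumes "n \<ge> 3" "p \<in> PC_vertices n" "q \<in> PC_vertices n"
  shows "gdist (PC_vertices n) (PC_adj n) p q = DD n p q"
  unfolding gdist_def
  by (rule Least_equality) (use path_upper[OF assms] path_lower[OF assms(1) _ assms(2)] in auto)


lemma dd0: "dd a 0 = a" by (simp add: dd_def)

lemma cd_o0: "n = 2*m+1 \<Longrightarrow> i < n \<Longrightarrow> cd n i 0 = (if i \<le> m then i else n - i)"
  unfolding cd_def dd_def by auto
lemma cd_om: "n = 2*m+1 \<Longrightarrow> i < n \<Longrightarrow> cd n i m = (if i \<le> m then m - i else i - m)"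
  unfolding cd_def dd_def by auto
lemma cd_e0: "n = 2*m \<Longrightarrow> i < n \<Longrightarrow> cd n i 0 = (if i \<le> m then i else n - i)"
  unfolding cd_def dd_def by auto
lemma cd_em: "n = 2*m \<Longrightarrow> i < n \<Longrightarrow> cd n i m = (if i \<le> m then m - i else i - m)"
  unfolding cd_def dd_def by auto
lemma cd_e1: "n = 2*m \<Longrightarrow> m \<ge> 2 \<Longrightarrow> i < n \<Longrightarrow> cd n i 1 = (if i = 0 then 1 else if i \<le> m + 1 then i - 1 else n + 1 - i)"
  unfolding cd_def dd_def by auto

lemma odd_inj:
  assumes "n = 2*m+1" "m \<ge> 1" "i < n" "j < n"
    "a + cd n i 0 = b + cd n j 0" "a + cd n i m = b + cd n j m"
  shows "a = b \<and> i = j"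
proof -
  note e = assms(5,6)[unfolded cd_o0[OF assms(1) assms(3)] cd_o0[OF assms(1) assms(4)]
      cd_om[OF assms(1) assms(3)] cd_om[OF assms(1) assms(4)]]
  consider "i \<le> m" "j \<le> m" | "i \<le> m" "\<not> j \<le> m" | "\<not> i \<le> m" "j \<le> m" | "\<not> i \<le> m" "\<not> j \<le> m" by blast
  then show ?thesis
  proof cases
    case 1
    then have "a + i = b + j" "a + (m - i) = b + (m - j)" using e by simp_all
    then show ?thesis using 1 by (auto split: nat_diff_split_asm)
  next
    case 2
    then have "a + i = b + (n - j)" "a + (m - i) = b + (j - m)" using e by simp_all
    then have "2*(i+j) = 4*m+1" using 2 assms(1,2,3,4) by (auto split: nat_diff_split_asm)
    then show ?thesis by presburger
  next
    case 3
    then have "a + (n - i) = b + j" "a + (i - m) = b + (m - j)" using e by simp_all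
    then have "2*(i+j) = 4*m+1" using 3 assms(1,2,3,4) by (auto split: nat_diff_split_asm)
    then show ?thesis by presburger
  next
    case 4
    then have "a + (n - i) = b + (n - j)" "a + (i - m) = b + (j - m)" using e by simp_all
    then show ?thesis using 4 assms(1,2,3,4) by (auto split: nat_diff_split_asm)
  qed
qed

lemma even_inj:
  assumes "n = 2*m" "m \<ge> 2" "i < n" "j < n"
    "a + cd n i 0 = b + cd n j 0" "a + cd n i m = b + cd n j m" "a + cd n i 1 = b + cd n j 1"
  shows "a = b \<and> i = j"
proof -
  note e = assms(5,6,7)[unfolded cd_e0[OF assms(1) assms(3)] cd_e0[OF assms(1) assms(4)]
      cd_em[OF assms(1) assms(3)] cd_em[OF assms(1) assms(4)]
      cd_e1[OF assms(1,2) assms(3)] cd_e1[OF assms(1,2) assms(4)]]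
  consider "i \<le> m" "j \<le> m" | "i \<le> m" "\<not> j \<le> m" | "\<not> i \<le> m" "j \<le> m" | "\<not> i \<le> m" "\<not> j \<le> m" by blast
  then show ?thesis
  proof cases
    case 1
    then have "a + i = b + j" "a + (m - i) = b + (m - j)" using e by simp_all
    then show ?thesis using 1 by (auto split: nat_diff_split_asm)
  next
    case 2
    then have "a + i = b + (n - j)" "a + (m - i) = b + (j - m)" using e by simp_all
    then have "a = b" "i + j = n" using 2 assms(1,2,3,4) by (auto split: nat_diff_split_asm)
    then show ?thesis using e(3) 2 assms by (auto split: if_splits)
  next
    case 3
    then have "a + (n - i) = b + j" "a + (i - m) = b + (m - j)" using e by simp_all
    then have "a = b" "i + j = n" using 3 assms(1,2,3,4) by (auto split: nat_diff_split_asm)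
    then show ?thesis using e(3) 3 assms by (auto split: if_splits)
  next
    case 4
    then have "a + (n - i) = b + (n - j)" "a + (i - m) = b + (j - m)" using e by simp_all
    then show ?thesis using 4 assms(1,2,3,4) by (auto split: nat_diff_split_asm)
  qed
qed

lemma cyc_one:
  assumes "n \<ge> 3" "j < n"
  shows "\<exists>i'<n. cd n i' j = cd n j j + 1"
  using assms by (intro exI[of _ "if j + 1 < n then j + 1 else 0"]) (auto simp: cd_def dd_def)

lemma cyc_two_le:
  assumes "n = 2*m" "m \<ge> 2" "j \<le> k" "k < n"
  shows "\<exists>i i'. i < n \<and> i' < n \<and> ((i \<noteq> i' \<and> cd n i j = cd n i' j \<and> cd n i k = cd n i' k) \<or>
       (cd n i' j = cd n i j + 1 \<and> cd n i' k = cd n i k + 1))"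
proof -
  consider "j = k" | "j < k" "k - j < m" | "j < k" "k - j > m" | "j < k" "k - j = m"
    using assms by linarith
  then show ?thesis
  proof cases
    case 1 then show ?thesis using assms
      by (intro exI[of _ j] exI[of _ "if j + 1 < n then j + 1 else 0"]) (auto simp: cd_def dd_def)
  next
    case 2 then show ?thesis using assms
      by (intro exI[of _ j] exI[of _ "if j > 0 then j - 1 else n - 1"]) (auto simp: cd_def dd_def)
  next
    case 3 then show ?thesis using assms
      by (intro exI[of _ j] exI[of _ "j + 1"]) (auto simp: cd_def dd_def)
  next
    case 4 then show ?thesis using assms
      by (intro exI[of _ "j + 1"] exI[of _ "if j > 0 then j - 1 else n - 1"]) (auto simp: cd_def dd_def)
  qed
qed

lemma cyc_two:
  assumes "n = 2*m" "m \<ge> 2" "j < n" "k < n"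
  shows "\<exists>i i'. i < n \<and> i' < n \<and> ((i \<noteq> i' \<and> cd n i j = cd n i' j \<and> cd n i k = cd n i' k) \<or>
       (cd n i' j = cd n i j + 1 \<and> cd n i' k = cd n i k + 1))"
proof (cases "j \<le> k")
  case True then show ?thesis using cyc_two_le[OF assms(1,2) True assms(4)] by blast
next
  case False then show ?thesis using cyc_two_le[OF assms(1,2) _ assms(3), of k] by auto
qed

lemma pair_two:
  assumes "n = 2*m" "m \<ge> 2" "x \<in> PC_vertices n" "y \<in> PC_vertices n"
  shows "\<exists>u\<in>PC_vertices n. \<exists>v\<in>PC_vertices n. u \<noteq> v \<and> DD n u x = DD n v x \<and> DD n u y = DD n v y"
proof -
  obtain b j where x: "x = (b,j)" by fastforce
  obtain c k where y: "y = (c,k)" by fastforce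
  have jk: "j < n" "k < n" using assms(3,4) x y by (auto simp: PC_vertices_def cycle_vertices_def)
  obtain i i' where ii: "i < n" "i' < n" "(i \<noteq> i' \<and> cd n i j = cd n i' j \<and> cd n i k = cd n i' k) \<or>
       (cd n i' j = cd n i j + 1 \<and> cd n i' k = cd n i k + 1)"
    using cyc_two[OF assms(1,2) jk] by blast
  show ?thesis
  proof (cases "i \<noteq> i' \<and> cd n i j = cd n i' j \<and> cd n i k = cd n i' k")
    case True
    then show ?thesis using ii x y
      by (intro bexI[of _ "(0,i)"] bexI[of _ "(0,i')"]) (auto simp: DD_def PC_vertices_def cycle_vertices_def)
  next
    case False
    then have h: "cd n i' j = cd n i j + 1 \<and> cd n i' k = cd n i k + 1" using ii by blast
    let ?A = "max b c"
    show ?thesis using ii x y h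
      by (intro bexI[of _ "(?A + 1,i)"] bexI[of _ "(?A,i')"]) (auto simp: DD_def dd_def PC_vertices_def cycle_vertices_def)
  qed
qed

lemma pair_one:
  assumes "n \<ge> 3" "x \<in> PC_vertices n"
  shows "\<exists>u\<in>PC_vertices n. \<exists>v\<in>PC_vertices n. u \<noteq> v \<and> DD n u x = DD n v x \<and> DD n u x = DD n v x"
proof -
  obtain b j where x: "x = (b,j)" by fastforce
  have j: "j < n" using assms x by (auto simp: PC_vertices_def cycle_vertices_def)
  obtain i' where "i' < n" "cd n i' j = cd n j j + 1" using cyc_one[OF assms(1) j] by blast
  then show ?thesis using x j
    by (intro bexI[of _ "(b + 1,j)"] bexI[of _ "(b,i')"]) (auto simp: DD_def dd_def PC_vertices_def cycle_vertices_def)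
qed

lemma not_resolving:
  assumes "n \<ge> 3" "x \<in> PC_vertices n" "y \<in> PC_vertices n" "S \<subseteq> {x, y}"
    "\<exists>u\<in>PC_vertices n. \<exists>v\<in>PC_vertices n. u \<noteq> v \<and> DD n u x = DD n v x \<and> DD n u y = DD n v y"
  shows "\<not> resolving_set (PC_vertices n) (PC_adj n) S"
proof
  assume r: "resolving_set (PC_vertices n) (PC_adj n) S"
  obtain u v where uv: "u \<in> PC_vertices n" "v \<in> PC_vertices n" "u \<noteq> v" "DD n u x = DD n v x" "DD n u y = DD n v y"
    using assms(5) by blast
  then obtain z where z: "z \<in> S" "resolves (PC_vertices n) (PC_adj n) z u v" using r unfolding resolving_set_def by blast
  have "z \<in> PC_vertices n" using z assms by auto
  then show False using z uv assms(4) gdist_eq[OF assms(1)] by (auto simp: resolves_def)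
qed

lemma small_subset:
  assumes "finite S" "card S \<le> 2" "S \<subseteq> V" "z \<in> V"
  shows "\<exists>x\<in>V. \<exists>y\<in>V. S \<subseteq> {x, y}"
proof -
  consider "card S = 0" | "card S = 1" | "card S = 2" using assms(2) by linarith
  then show ?thesis
  proof cases
    case 1 then show ?thesis using assms by auto
  next
    case 2 then show ?thesis using assms by (auto simp: card_Suc_eq)
  next
    case 3 then show ?thesis using assms by (auto simp: card_Suc_eq numeral_2_eq_2)
  qed
qed

lemma dim_eq:
  assumes "finite S0" "resolving_set V adj S0"
    "\<And>S. finite S \<Longrightarrow> resolving_set V adj S \<Longrightarrow> card S0 \<le> card S"
  shows "metric_dim V adj = enat (card S0) \<and> metric_basis V adj S0"
proof -
  have "metric_dim V adj = enat (card S0)"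
    unfolding metric_dim_def
  proof (rule antisym)
    show "Inf {enat (card S) |S. finite S \<and> resolving_set V adj S} \<le> enat (card S0)"
      using assms by (intro Inf_lower) auto
    show "enat (card S0) \<le> Inf {enat (card S) |S. finite S \<and> resolving_set V adj S}"
      using assms by (intro Inf_greatest) auto
  qed
  then show ?thesis using assms unfolding metric_basis_def by simp
qed

theorem proposition6:
  fixes n :: nat
  assumes "n \<ge> 3"
  shows "(odd n \<longrightarrow>
            metric_dim (PC_vertices n) (PC_adj n) = 2 \<and>
            metric_basis (PC_vertices n) (PC_adj n) {(0, 0), (0, (n - 1) div 2)}) \<and>
         (even n \<longrightarrow>
            metric_dim (PC_vertices n) (PC_adj n) = 3 \<and>
            metric_basis (PC_vertices n) (PC_adj n) {(0, 0), (0, n div 2), (0, 1)})"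
proof (intro conjI impI)
  let ?V = "PC_vertices n" and ?A = "PC_adj n"
  have z: "(0,0) \<in> ?V" using assms by (auto simp: PC_vertices_def cycle_vertices_def)
  {
    assume o: "odd n"
    then obtain m where m: "n = 2*m+1" by (metis oddE)
    have m1: "m \<ge> 1" using m assms by linarith
    have md: "(n - 1) div 2 = m" using m by simp
    let ?S = "{(0::nat, 0::nat), (0, m)}"
    have cS: "card ?S = 2" using m1 by simp
    have res: "resolving_set ?V ?A ?S"
      unfolding resolving_set_def
    proof (intro conjI ballI impI)
      show "?S \<subseteq> ?V" using m by (auto simp: PC_vertices_def cycle_vertices_def)
      fix u v assume uv: "u \<in> ?V" "v \<in> ?V" "u \<noteq> v"
      obtain a i where u: "u = (a,i)" by fastforce
      obtain b j where v: "v = (b,j)" by fastforce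
      have ij: "i < n" "j < n" using uv u v by (auto simp: PC_vertices_def cycle_vertices_def)
      have in1: "(0,0) \<in> ?V" "(0,m) \<in> ?V" using m by (auto simp: PC_vertices_def cycle_vertices_def)
      show "\<exists>x\<in>?S. resolves ?V ?A x u v"
      proof (rule ccontr)
        assume "\<not> ?thesis"
        then have "DD n u (0,0) = DD n v (0,0)" "DD n u (0,m) = DD n v (0,m)"
          using gdist_eq[OF assms uv(1)] gdist_eq[OF assms uv(2)] in1 by (auto simp: resolves_def)
        then have "a + cd n i 0 = b + cd n j 0" "a + cd n i m = b + cd n j m"
          using u v by (simp_all add: DD_def dd0)
        then show False using odd_inj[OF m m1 ij] uv(3) u v by auto
      qed
    qed
    have low: "card ?S \<le> card S" if fin: "finite S" and rS: "resolving_set ?V ?A S" for S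
    proof (rule ccontr)
      assume "\<not> ?thesis"
      then have "card S \<le> 2" using cS by linarith
      moreover have "S \<subseteq> ?V" using that by (simp add: resolving_set_def)
      ultimately obtain x y where xy: "x \<in> ?V" "y \<in> ?V" "S \<subseteq> {x,y}"
        using small_subset[OF fin _ _ z] by blast
      have "card S \<le> 1" using \<open>\<not> card ?S \<le> card S\<close> cS by linarith
      have "S \<subseteq> {x}"
      proof (cases "S \<subseteq> {x}")
        case False
        then have "y \<in> S" "x \<noteq> y" using xy by auto
        moreover have "S \<subseteq> {y}"
        proof (rule ccontr)
          assume "\<not> S \<subseteq> {y}"
          then have "x \<in> S" using xy by auto
          then have "{x,y} \<subseteq> S" using \<open>y \<in> S\<close> by auto
          then have "card {x,y} \<le> card S" using that(1) card_mono by blast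
          then show False using \<open>x \<noteq> y\<close> \<open>card S \<le> 1\<close> by simp
        qed
        ultimately show ?thesis
          using not_resolving[OF assms xy(2) xy(2) _ pair_one[OF assms xy(2)]] that(2) by auto
      qed simp
      then show False
        using not_resolving[OF assms xy(1) xy(1) _ pair_one[OF assms xy(1)]] that(2) by auto
    qed
    have "metric_dim ?V ?A = enat (card ?S) \<and> metric_basis ?V ?A ?S"
      by (rule dim_eq) (use res low in auto)
    then show "metric_dim ?V ?A = 2" "metric_basis ?V ?A {(0, 0), (0, (n - 1) div 2)}"
      using cS md by (simp_all add: numeral_eq_enat)
  }
  {
    assume e: "even n"
    then obtain m where m: "n = 2*m" by blast
    have m2: "m \<ge> 2" using m assms by linarith
    have md: "n div 2 = m" using m by simp
    let ?S = "{(0::nat, 0::nat), (0, m), (0,1)}"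
    have cS: "card ?S = 3" using m2 by simp
    have res: "resolving_set ?V ?A ?S"
      unfolding resolving_set_def
    proof (intro conjI ballI impI)
      show "?S \<subseteq> ?V" using m m2 by (auto simp: PC_vertices_def cycle_vertices_def)
      fix u v assume uv: "u \<in> ?V" "v \<in> ?V" "u \<noteq> v"
      obtain a i where u: "u = (a,i)" by fastforce
      obtain b j where v: "v = (b,j)" by fastforce
      have ij: "i < n" "j < n" using uv u v by (auto simp: PC_vertices_def cycle_vertices_def)
      have in1: "(0,0) \<in> ?V" "(0,m) \<in> ?V" "(0,1) \<in> ?V" using m m2 by (auto simp: PC_vertices_def cycle_vertices_def)
      show "\<exists>x\<in>?S. resolves ?V ?A x u v"
      proof (rule ccontr)
        assume "\<not> ?thesis"
        then have "DD n u (0,0) = DD n v (0,0)" "DD n u (0,m) = DD n v (0,m)" "DD n u (0,1) = DD n v (0,1)"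
          using gdist_eq[OF assms uv(1)] gdist_eq[OF assms uv(2)] in1 by (auto simp: resolves_def)
        then have "a + cd n i 0 = b + cd n j 0" "a + cd n i m = b + cd n j m" "a + cd n i 1 = b + cd n j 1"
          using u v by (simp_all add: DD_def dd0)
        then show False using even_inj[OF m m2 ij] uv(3) u v by auto
      qed
    qed
    have low: "card ?S \<le> card S" if fin: "finite S" and rS: "resolving_set ?V ?A S" for S
    proof (rule ccontr)
      assume "\<not> ?thesis"
      then have "card S \<le> 2" using cS by linarith
      moreover have "S \<subseteq> ?V" using that by (simp add: resolving_set_def)
      ultimately obtain x y where xy: "x \<in> ?V" "y \<in> ?V" "S \<subseteq> {x,y}"
        using small_subset[OF fin _ _ z] by blast
      show False
        using not_resolving[OF assms xy pair_two[OF m m2 xy(1,2)]] that(2) by auto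
    qed
    have "metric_dim ?V ?A = enat (card ?S) \<and> metric_basis ?V ?A ?S"
      by (rule dim_eq) (use res low in auto)
    then show "metric_dim ?V ?A = 3" "metric_basis ?V ?A {(0, 0), (0, n div 2), (0, 1)}"
      using cS md by (simp_all add: numeral_eq_enat)
  }
qed

end
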